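(* Let $\nu>0$, $\epsilon\in\{0,1\}$, and $\lambda\neq0$ real. For every smooth solution $U(X,T)$ of $$-2\nu^2U_XU_{XX}+3\epsilon U_XU-\nu^2U_{XXX}U+\tfrac23U_{XXX}-\tfrac23\nu^{5/2}U_{XXX}+\epsilon U_T-\nu^2U_{XXT}=0,\qquad(E_{\nu,\epsilon})$$ the system $$\hat\gamma_X=-\frac{\hat\gamma^2}{2\lambda}-\frac{\epsilon U}{\nu^2}+\frac{\lambda\epsilon}{2\nu^2}+\frac{\epsilon}{3\nu^{3/2}}+U_{XX}-\frac{\epsilon}{3\nu^4},$$ $$\hat\gamma_T=\Big(\frac{U}{2\lambda}-\frac{1}{3\nu^2\lambda}+\frac12+\frac{\sqrt\nu}{3\lambda}\Big)\hat\gamma^2-U_X\hat\gamma-\tfrac23\sqrt\nu\,U_{XX}-\frac{2\epsilon}{9\nu^6}-U_{XX}U+\frac{\epsilon U^2}{\nu^2}-\frac{2\lambda\epsilon}{3\nu^{3/2}}+\frac{2\lambda\epsilon}{3\nu^4}+\frac{\lambda\epsilon U}{2\nu^2}-\frac{\lambda^2\epsilon}{2\nu^2}-\frac{2\epsilon}{9\nu}-\frac{\epsilon U}{3\nu^4}+\frac{4\epsilon}{9\nu^{7/2}}+\frac{\epsilon U}{3\nu^{3/2}}+\frac{2U_{XX}}{3\nu^2}$$ for $\hat\gamma(X,T)$ is completely integrable; that is, $\hat\gamma$ is a quadratic pseudo-potential of $(E_{\nu,\epsilon})$.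
   Context: A real function $\Gamma$ is a pseudo-potential of an equation if there are smooth functions $f,g$ of $\Gamma$, the independent variables, $U$ and finitely many derivatives of $U$ such that $\Omega_\Gamma=d\Gamma-(f\,dX+g\,dT)$ satisfies $d\Omega_\Gamma\equiv0\bmod\Omega_\Gamma$ on every solution (equivalently, $\Gamma_X=f$, $\Gamma_T=g$ is compatible on solutions); it is quadratic if $f,g$ are polynomials of degree at most two in $\Gamma$. *)

theory Defs
  imports "HOL-Analysis.Analysis"
begin

definition pX :: "(real \<times> real \<Rightarrow> real) \<Rightarrow> real \<times> real \<Rightarrow> real" where
  "pX F = (\<lambda>p. deriv (\<lambda>s. F (s, snd p)) (fst p))"

definition pT :: "(real \<times> real \<Rightarrow> real) \<Rightarrow> real \<times> real \<Rightarrow> real" where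
  "pT F = (\<lambda>p. deriv (\<lambda>s. F (fst p, s)) (snd p))"

text \<open>Smooth (C-infinity) functions of two real variables: differentiable everywhere,
  and both partial derivatives are again smooth.\<close>

coinductive smooth2 :: "(real \<times> real \<Rightarrow> real) \<Rightarrow> bool" where
  "(\<forall>p. F differentiable (at p)) \<Longrightarrow> smooth2 (pX F) \<Longrightarrow> smooth2 (pT F) \<Longrightarrow> smooth2 F"

definition solves_E :: "real \<Rightarrow> real \<Rightarrow> (real \<times> real \<Rightarrow> real) \<Rightarrow> bool" where
  "solves_E nu eps U \<longleftrightarrow> (\<forall>p.
     - 2 * nu^2 * pX U p * pX (pX U) p + 3 * eps * pX U p * U p
     - nu^2 * pX (pX (pX U)) p * U p + 2/3 * pX (pX (pX U)) p
     - 2/3 * nu powr (5/2) * pX (pX (pX U)) p + eps * pT U p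
     - nu^2 * pT (pX (pX U)) p = 0)"

definition fhat :: "real \<Rightarrow> real \<Rightarrow> real \<Rightarrow> (real \<times> real \<Rightarrow> real) \<Rightarrow> real \<Rightarrow> real \<times> real \<Rightarrow> real" where
  "fhat nu eps lam U gam p =
     - (gam^2) / (2 * lam) - eps * U p / nu^2 + lam * eps / (2 * nu^2)
     + eps / (3 * nu powr (3/2)) + pX (pX U) p - eps / (3 * nu^4)"

definition ghat :: "real \<Rightarrow> real \<Rightarrow> real \<Rightarrow> (real \<times> real \<Rightarrow> real) \<Rightarrow> real \<Rightarrow> real \<times> real \<Rightarrow> real" where
  "ghat nu eps lam U gam p =
     (U p / (2 * lam) - 1 / (3 * nu^2 * lam) + 1/2 + sqrt nu / (3 * lam)) * gam^2
     - pX U p * gam - 2/3 * sqrt nu * pX (pX U) p - 2 * eps / (9 * nu^6)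
     - pX (pX U) p * U p + eps * (U p)^2 / nu^2
     - 2 * lam * eps / (3 * nu powr (3/2)) + 2 * lam * eps / (3 * nu^4)
     + lam * eps * U p / (2 * nu^2) - lam^2 * eps / (2 * nu^2)
     - 2 * eps / (9 * nu) - eps * U p / (3 * nu^4)
     + 4 * eps / (9 * nu powr (7/2)) + eps * U p / (3 * nu powr (3/2))
     + 2 * pX (pX U) p / (3 * nu^2)"

text \<open>Frobenius compatibility of Gamma_X = f, Gamma_T = g: with
  Omega = dGamma - f dX - g dT, dOmega = 0 mod Omega  iff
  f_T + f_Gamma g = g_X + g_Gamma f identically in (Gamma, X, T).\<close>

definition compatible_system ::
  "(real \<Rightarrow> real \<times> real \<Rightarrow> real) \<Rightarrow> (real \<Rightarrow> real \<times> real \<Rightarrow> real) \<Rightarrow> bool" where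
  "compatible_system f g \<longleftrightarrow> (\<forall>gam x t.
     deriv (\<lambda>s. f gam (x, s)) t + deriv (\<lambda>c. f c (x, t)) gam * g gam (x, t)
   = deriv (\<lambda>s. g gam (s, t)) x + deriv (\<lambda>c. g c (x, t)) gam * f gam (x, t))"

end

theory Submission
  imports Defs
begin

lemma smooth2_diff: "smooth2 F \<Longrightarrow> F differentiable (at p)"
  by (cases p) (auto elim: smooth2.cases)

lemma smooth2_pX: "smooth2 F \<Longrightarrow> smooth2 (pX F)"
  by (erule smooth2.cases) auto

lemma dX: assumes "smooth2 F"
  shows "((\<lambda>s. F (s,t)) has_real_derivative pX F (s,t)) (at s)"
proof -
  have "(\<lambda>s. (s,t)) differentiable (at s)"
    by (intro derivative_intros)
  moreover have "F differentiable (at ((\<lambda>s. (s,t)) s))" using smooth2_diff[OF assms] by simp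
  ultimately have "(F \<circ> (\<lambda>s. (s,t))) differentiable (at s)"
    by (rule differentiable_chain_at)
  then have "(\<lambda>s. F (s,t)) differentiable (at s)" by (simp add: o_def)
  then show ?thesis unfolding pX_def
    using DERIV_deriv_iff_real_differentiable by fastforce
qed

lemma dT: assumes "smooth2 F"
  shows "((\<lambda>s. F (x,s)) has_real_derivative pT F (x,s)) (at s)"
proof -
  have "(\<lambda>s. (x,s)) differentiable (at s)"
    by (intro derivative_intros)
  moreover have "F differentiable (at ((\<lambda>s. (x,s)) s))" using smooth2_diff[OF assms] by simp
  ultimately have "(F \<circ> (\<lambda>s. (x,s))) differentiable (at s)"
    by (rule differentiable_chain_at)
  then have "(\<lambda>s. F (x,s)) differentiable (at s)" by (simp add: o_def)
  then show ?thesis unfolding pT_def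
    using DERIV_deriv_iff_real_differentiable by fastforce
qed

lemma alg:
  fixes nu r lam eps g u0 u1 u2 u3 ut u2t :: real
  assumes r: "r > 0" and nu: "nu = r^2" and lam: "lam \<noteq> 0" and eps: "eps = 0 \<or> eps = 1"
  and E: "- 2 * nu^2 * u1 * u2 + 3 * eps * u1 * u0 - nu^2 * u3 * u0 + 2/3 * u3
     - 2/3 * (nu^2 * r) * u3 + eps * ut - nu^2 * u2t = 0"
  shows "(- eps * ut / nu^2 + u2t) + (- g / lam) *
     ((u0 / (2 * lam) - 1 / (3 * nu^2 * lam) + 1/2 + r / (3 * lam)) * g^2
     - u1 * g - 2/3 * r * u2 - 2 * eps / (9 * nu^6)
     - u2 * u0 + eps * (u0)^2 / nu^2
     - 2 * lam * eps / (3 * (nu * r)) + 2 * lam * eps / (3 * nu^4)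
     + lam * eps * u0 / (2 * nu^2) - lam^2 * eps / (2 * nu^2)
     - 2 * eps / (9 * nu) - eps * u0 / (3 * nu^4)
     + 4 * eps / (9 * (nu^3 * r)) + eps * u0 / (3 * (nu * r))
     + 2 * u2 / (3 * nu^2))
   = ((u1 / (2*lam)) * g^2 - u2 * g - 2/3 * r * u3 - u3 * u0 - u2 * u1
     + eps * 2 * u0 * u1 / nu^2 + lam * eps * u1 / (2 * nu^2) - eps * u1 / (3 * nu^4)
     + eps * u1 / (3 * (nu * r)) + 2 * u3 / (3 * nu^2))
   + (2 * (u0 / (2 * lam) - 1 / (3 * nu^2 * lam) + 1/2 + r / (3 * lam)) * g - u1) *
     (- (g^2) / (2 * lam) - eps * u0 / nu^2 + lam * eps / (2 * nu^2)
     + eps / (3 * (nu * r)) + u2 - eps / (3 * nu^4))"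
proof -
  have nz: "nu \<noteq> 0" using r nu by simp
  have u2t: "u2t = (- 2 * nu^2 * u1 * u2 + 3 * eps * u1 * u0 - nu^2 * u3 * u0 + 2/3 * u3
     - 2/3 * (nu^2 * r) * u3 + eps * ut) / nu^2"
    using E nz by (simp add: field_simps)
  show ?thesis
  proof -
    have i1: "lam * inverse lam = 1" using lam by simp
    have i2: "r * inverse r = 1" using r by simp
    show ?thesis using eps unfolding u2t nu
      apply (simp only: divide_inverse inverse_mult_distrib power_inverse[symmetric])
      apply (elim disjE)
      using i1 i2 by algebra+
  qed
qed

lemma powr_hs:
  assumes "nu > (0::real)"
  shows "nu powr (3/2) = nu * sqrt nu" "nu powr (5/2) = nu^2 * sqrt nu"
    "nu powr (7/2) = nu^3 * sqrt nu"
proof -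
  have a: "nu powr (real n + 1/2) = nu ^ n * sqrt nu" for n :: nat
    using assms by (simp add: powr_add powr_realpow powr_half_sqrt)
  show "nu powr (3/2) = nu * sqrt nu" using a[of 1] by simp
  show "nu powr (5/2) = nu^2 * sqrt nu" using a[of 2] by simp
  show "nu powr (7/2) = nu^3 * sqrt nu" using a[of 3] by simp
qed

theorem theorem4:
  fixes nu eps lam :: real and U :: "real \<times> real \<Rightarrow> real"
  assumes "nu > 0" and "eps = 0 \<or> eps = 1" and "lam \<noteq> 0"
    and "smooth2 U" and "solves_E nu eps U"
  shows "compatible_system (fhat nu eps lam U) (ghat nu eps lam U)"
  unfolding compatible_system_def
proof (intro allI)
  fix gam x t
  have s0: "smooth2 U" by fact
  have s1: "smooth2 (pX U)" using s0 by (rule smooth2_pX)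
  have s2: "smooth2 (pX (pX U))" using s1 by (rule smooth2_pX)
  let ?u0 = "U (x,t)" and ?u1 = "pX U (x,t)" and ?u2 = "pX (pX U) (x,t)"
    and ?u3 = "pX (pX (pX U)) (x,t)" and ?ut = "pT U (x,t)" and ?u2t = "pT (pX (pX U)) (x,t)"
  have D1: "deriv (\<lambda>s. fhat nu eps lam U gam (x, s)) t = - eps * ?ut / nu^2 + ?u2t"
    unfolding fhat_def
    using assms(1) by (intro DERIV_imp_deriv) (auto intro!: derivative_eq_intros dT[OF s0] dT[OF s2] simp: field_simps)
  have D2: "deriv (\<lambda>c. fhat nu eps lam U c (x, t)) gam = - gam / lam"
    unfolding fhat_def
    using assms(1,3) by (intro DERIV_imp_deriv) (auto intro!: derivative_eq_intros simp: field_simps)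
  have D3: "deriv (\<lambda>s. ghat nu eps lam U gam (s, t)) x =
     (?u1 / (2*lam)) * gam^2 - ?u2 * gam - 2/3 * sqrt nu * ?u3 - ?u3 * ?u0 - ?u2 * ?u1
     + eps * 2 * ?u0 * ?u1 / nu^2 + lam * eps * ?u1 / (2 * nu^2) - eps * ?u1 / (3 * nu^4)
     + eps * ?u1 / (3 * (nu * sqrt nu)) + 2 * ?u3 / (3 * nu^2)"
    unfolding ghat_def powr_hs[OF assms(1)]
    using assms(1,3) real_sqrt_gt_zero[OF assms(1)] apply (intro DERIV_imp_deriv)
    apply (auto intro!: derivative_eq_intros dX[OF s0] dX[OF s1] dX[OF s2])
    apply (simp add: divide_simps)
    by algebra
  have D4: "deriv (\<lambda>c. ghat nu eps lam U c (x, t)) gam =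
     2 * (?u0 / (2 * lam) - 1 / (3 * nu^2 * lam) + 1/2 + sqrt nu / (3 * lam)) * gam - ?u1"
    unfolding ghat_def
    using assms(1,3) by (intro DERIV_imp_deriv) (auto intro!: derivative_eq_intros simp: field_simps)
  have E: "- 2 * nu^2 * ?u1 * ?u2 + 3 * eps * ?u1 * ?u0
     - nu^2 * ?u3 * ?u0 + 2/3 * ?u3
     - 2/3 * nu powr (5/2) * ?u3 + eps * ?ut
     - nu^2 * ?u2t = 0" using assms(5) unfolding solves_E_def by blast
  show "deriv (\<lambda>s. fhat nu eps lam U gam (x, s)) t + deriv (\<lambda>c. fhat nu eps lam U c (x, t)) gam * ghat nu eps lam U gam (x, t)
   = deriv (\<lambda>s. ghat nu eps lam U gam (s, t)) x + deriv (\<lambda>c. ghat nu eps lam U c (x, t)) gam * fhat nu eps lam U gam (x, t)"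
    unfolding D1 D2 D3 D4
    unfolding fhat_def ghat_def powr_hs[OF assms(1)]
    apply (rule alg)
    using assms(1,2,3) E unfolding powr_hs[OF assms(1)] by auto
qed

end
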